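(* There is a constant $C$ (depending only on $r$) such that for all $N\ge1$, all $0<\delta<1/2$ and all $0<S\le\frac12N^{1-r}$, $$\sum_{k=1}^N P\Big(W_k\Big(\frac kN\Big)^r\ge\frac{(1-\delta)S}{N}\Big)\le C+g(S)(1+C\delta),$$ where $g(S)=r\,\Gamma\!\big(\tfrac{2-r}{1-r}\big)\,N\,S^{-1/(1-r)}$.
   Context: Fix $r\in(0,1)$. $W_1,W_2,\dots$ are independent random variables with $W_1=1$ and, for $k\ge2$, $P(W_k>0)=r$ and, conditional on $W_k>0$, $W_k\sim\mathrm{Beta}(1,k-1)$. (These arise as $W_k=\lim_{N\to\infty}V_{k,N}$ in the multitype Yule process with new-type probability $r$, where $V_{k,N}$ is the fraction of type-$k$ individuals among those with type in $\{1,\dots,k\}$ when the population has size $N$.) *)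

theory Defs
  imports "HOL-Probability.Probability"
begin

definition beta1_density :: "nat \<Rightarrow> real \<Rightarrow> real" where
  "beta1_density k x = (if 0 \<le> x \<and> x \<le> 1 then real (k - 1) * (1 - x) ^ (k - 2) else 0)"

text \<open>Law of W_k: W_1 = 1; for k \<ge> 2, with probability r W_k ~ Beta(1,k-1), otherwise W_k = 0.\<close>
definition W_law :: "real \<Rightarrow> nat \<Rightarrow> real measure" where
  "W_law r k = (if k \<le> 1 then return lborel 1
     else measure_pmf (bernoulli_pmf r) \<bind>
            (\<lambda>b. if b then density lborel (\<lambda>x. ennreal (beta1_density k x))
                  else return lborel 0))"

definition g_fun :: "real \<Rightarrow> nat \<Rightarrow> real \<Rightarrow> real" where
  "g_fun r N S = r * Gamma ((2 - r) / (1 - r)) * real N * S powr (- 1 / (1 - r))"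

end

theory Submission
  imports Defs
begin


lemma beta_meas[measurable]: "(\<lambda>x. ennreal (beta1_density k x)) \<in> borel_measurable borel"
  unfolding beta1_density_def by measurable

lemma beta_tail:
  assumes "0 \<le> u" "u \<le> 1"
  shows "(\<integral>\<^sup>+x. ennreal (beta1_density (Suc (Suc m)) x) * indicator {u..} x \<partial>lborel)
         = ennreal ((1 - u) ^ Suc m)"
proof -
  have "(\<integral>\<^sup>+x. ennreal (beta1_density (Suc (Suc m)) x) * indicator {u..} x \<partial>lborel)
      = (\<integral>\<^sup>+x. ennreal (real (Suc m) * (1 - x) ^ m) * indicator {u..1} x \<partial>lborel)"
    using assms by (intro nn_integral_cong) (auto simp: beta1_density_def indicator_def)
  also have "\<dots> = ennreal ((\<lambda>x. - ((1 - x) ^ Suc m)) 1 - (\<lambda>x. - ((1 - x) ^ Suc m)) u)"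
  proof (rule nn_integral_FTC_Icc)
    show "(\<lambda>x. real (Suc m) * (1 - x) ^ m) \<in> borel_measurable borel" by measurable
    fix x assume "x \<in> {u..1}"
    then show "0 \<le> real (Suc m) * (1 - x) ^ m" by auto
    show "((\<lambda>x. - ((1 - x) ^ Suc m)) has_real_derivative real (Suc m) * (1 - x) ^ m) (at x)"
      by (auto intro!: derivative_eq_intros) (cases m; simp add: algebra_simps)
  qed (use assms in auto)
  finally show ?thesis by simp
qed

lemma beta_prob: "prob_space (density lborel (\<lambda>x. ennreal (beta1_density (Suc (Suc m)) x)))"
proof (rule prob_spaceI)
  have "emeasure (density lborel (\<lambda>x. ennreal (beta1_density (Suc (Suc m)) x))) UNIV
     = (\<integral>\<^sup>+x. ennreal (beta1_density (Suc (Suc m)) x) * indicator {0..} x \<partial>lborel)"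
    by (subst emeasure_density) (auto intro!: nn_integral_cong simp: beta1_density_def indicator_def)
  also have "\<dots> = 1" by (subst beta_tail) auto
  finally show "emeasure (density lborel (\<lambda>x. ennreal (beta1_density (Suc (Suc m)) x)))
     (space (density lborel (\<lambda>x. ennreal (beta1_density (Suc (Suc m)) x)))) = 1" by simp
qed

lemma W_tail:
  assumes r: "0 < r" "r < 1" and u: "0 < u" "u \<le> 1"
  shows "measure (W_law r (Suc (Suc m))) {u..} = r * (1 - u) ^ Suc m"
proof -
  let ?f = "\<lambda>b. if b then density lborel (\<lambda>x. ennreal (beta1_density (Suc (Suc m)) x))
                  else return lborel (0::real)"
  have meas: "?f \<in> measurable (measure_pmf (bernoulli_pmf r)) (subprob_algebra lborel)"
    using beta_prob[of m]
    by (auto simp: space_subprob_algebra prob_space_imp_subprob_space prob_space_return)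
  have "emeasure (W_law r (Suc (Suc m))) {u..} = (\<integral>\<^sup>+b. emeasure (?f b) {u..} \<partial>measure_pmf (bernoulli_pmf r))"
    unfolding W_law_def by (simp, subst emeasure_bind[OF _ meas]) auto
  also have "\<dots> = emeasure (?f True) {u..} * r + emeasure (?f False) {u..} * (1 - r)"
    using r by (subst nn_integral_bernoulli_pmf) auto
  also have "\<dots> = ennreal ((1 - u) ^ Suc m) * r"
    using u by (simp add: emeasure_density beta_tail emeasure_return)
  finally show ?thesis unfolding measure_def using r u
    by (simp add: ennreal_mult'' [symmetric] mult.commute)
qed



lemma cell_bound:
  fixes s a A B :: real
  assumes s: "s > 0" and A: "0 < A" "A \<le> B"
  shows "ennreal (exp (-B) / s * (B powr s - A powr s))
     \<le> (\<integral>\<^sup>+y. ennreal (indicator {0..} y * y powr (s - 1) / exp y) * indicator {A<..B} y \<partial>lborel)"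
proof -
  have "(\<integral>\<^sup>+y. ennreal (exp (-B) / s) * (ennreal (s * y powr (s - 1)) * indicator {A..B} y) \<partial>lborel)
      \<le> (\<integral>\<^sup>+y. ennreal (indicator {0..} y * y powr (s - 1) / exp y) * indicator {A<..B} y \<partial>lborel)"
  proof (rule nn_integral_mono_AE)
    show "AE y in lborel. ennreal (exp (-B) / s) * (ennreal (s * y powr (s - 1)) * indicator {A..B} y)
       \<le> ennreal (indicator {0..} y * y powr (s - 1) / exp y) * indicator {A<..B} y"
      using AE_lborel_singleton[of A]
    proof eventually_elim
      case (elim y)
      show ?case
      proof (cases "y \<in> {A..B}")
        case True
        with elim A have y: "A < y" "y \<le> B" by auto
        have "exp (-B) / s * (s * y powr (s - 1)) \<le> y powr (s - 1) / exp y"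
        proof -
          have "exp (-B) / s * (s * y powr (s - 1)) = y powr (s - 1) * exp (-B)" using s by simp
          also have "\<dots> \<le> y powr (s - 1) * exp (-y)" using y by (intro mult_left_mono) auto
          finally show ?thesis by (simp add: exp_minus field_simps)
        qed
        then show ?thesis using y A s
          by (simp add: ennreal_mult''[symmetric] indicator_def)
      qed simp
    qed
  qed
  also have "(\<integral>\<^sup>+y. ennreal (exp (-B) / s) * (ennreal (s * y powr (s - 1)) * indicator {A..B} y) \<partial>lborel)
      = ennreal (exp (-B) / s) * (\<integral>\<^sup>+y. ennreal (s * y powr (s - 1)) * indicator {A..B} y \<partial>lborel)"
    by (rule nn_integral_cmult) measurable
  also have "(\<integral>\<^sup>+y. ennreal (s * y powr (s - 1)) * indicator {A..B} y \<partial>lborel) = ennreal (B powr s - A powr s)"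
  proof (rule nn_integral_FTC_Icc)
    show "(\<lambda>y. s * y powr (s - 1)) \<in> borel_measurable borel" by measurable
    fix x assume x: "x \<in> {A..B}"
    then show "0 \<le> s * x powr (s - 1)" using s by auto
    show "((\<lambda>y. y powr s) has_real_derivative s * x powr (s - 1)) (at x)"
      using x A by (intro has_real_derivative_powr) auto
  qed (use A in auto)
  finally have "ennreal (exp (- B) / s) * ennreal (B powr s - A powr s) \<le> (\<integral>\<^sup>+y. ennreal (indicator {0..} y * y powr (s - 1) / exp y) * indicator {A<..B} y \<partial>lborel)" .
  moreover have "A powr s \<le> B powr s" using A s by (intro powr_mono2) auto
  ultimately show ?thesis by (subst ennreal_mult'') auto
qed

lemma main_sum:
  fixes s a :: real
  assumes s: "s > 1" and a: "a > 0"
  shows "(\<Sum>k=2..N. exp (- (a * real k powr (1/s)))) \<le> Gamma (s + 1) * a powr (-s)"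
proof -
  define A where "A k = a * real (k - 1) powr (1/s)" for k :: nat
  define B where "B k = a * real k powr (1/s)" for k :: nat
  define G where "G y = indicator {0..} y * y powr (s - 1) / exp y" for y :: real
  have Bs: "B k powr s = a powr s * real k" for k
    using a s unfolding B_def by (simp add: powr_mult powr_powr)
  have As: "A k powr s = a powr s * real (k - 1)" for k
    using a s unfolding A_def by (simp add: powr_mult powr_powr)
  have cell: "ennreal (exp (- B k) * a powr s / s) \<le> (\<integral>\<^sup>+y. ennreal (G y) * indicator {A k<..B k} y \<partial>lborel)"
    if k: "k \<in> {2..N}" for k
  proof -
    have "0 < A k" using k a unfolding A_def by auto
    moreover have "A k \<le> B k" unfolding A_def B_def using a s k
      by (intro mult_left_mono powr_mono2) auto
    ultimately have "ennreal (exp (- B k) / s * (B k powr s - A k powr s)) \<le> (\<integral>\<^sup>+y. ennreal (G y) * indicator {A k<..B k} y \<partial>lborel)"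
      unfolding G_def using s by (intro cell_bound) auto
    moreover have "B k powr s - A k powr s = a powr s" using k by (simp add: Bs As of_nat_diff algebra_simps)
    ultimately show ?thesis by simp
  qed
  have disj: "disjoint_family_on (\<lambda>k. {A k<..B k}) {2..N}"
  proof -
    have *: "{A j<..B j} \<inter> {A k<..B k} = {}" if "j < k" for j k
    proof -
      have "B j \<le> A k" unfolding A_def B_def using a s that
        by (intro mult_left_mono powr_mono2) auto
      then show ?thesis by auto
    qed
    show ?thesis unfolding disjoint_family_on_def
      by (metis "*" inf_commute linorder_neqE_nat)
  qed
  have "ennreal (\<Sum>k=2..N. exp (- B k) * a powr s / s) = (\<Sum>k=2..N. ennreal (exp (- B k) * a powr s / s))"
    using s by (intro sum_ennreal[symmetric]) auto
  also have "\<dots> \<le> (\<Sum>k=2..N. \<integral>\<^sup>+y. ennreal (G y) * indicator {A k<..B k} y \<partial>lborel)"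
    by (intro sum_mono cell)
  also have "\<dots> = (\<integral>\<^sup>+y. (\<Sum>k=2..N. ennreal (G y) * indicator {A k<..B k} y) \<partial>lborel)"
    unfolding G_def by (rule nn_integral_sum[symmetric]) measurable
  also have "\<dots> = (\<integral>\<^sup>+y. ennreal (G y) * indicator (\<Union>k\<in>{2..N}. {A k<..B k}) y \<partial>lborel)"
    by (intro nn_integral_cong) (simp add: indicator_UN_disjoint[OF _ disj] sum_distrib_left)
  also have "\<dots> \<le> (\<integral>\<^sup>+y. ennreal (G y) \<partial>lborel)"
    by (intro nn_integral_mono) (auto simp: indicator_def)
  also have "\<dots> = ennreal (Gamma s)"
    unfolding G_def using s by (simp add: Gamma_conv_nn_integral_real)
  finally have "(\<Sum>k=2..N. exp (- B k) * a powr s / s) \<le> Gamma s"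
    using s by (subst (asm) ennreal_le_iff) auto
  moreover have "(\<Sum>k=2..N. exp (- B k)) * (a powr s / s) = (\<Sum>k=2..N. exp (- B k) * a powr s / s)"
    by (simp add: sum_distrib_right sum_divide_distrib)
  ultimately have "(\<Sum>k=2..N. exp (- B k)) * (a powr s / s) \<le> Gamma s" by simp
  then have "(\<Sum>k=2..N. exp (- B k)) \<le> Gamma s * s * a powr (-s)"
    using s a by (simp add: field_simps powr_minus)
  moreover have "Gamma (s + 1) = s * Gamma s"
    using s by (subst Gamma_plus1) (auto simp: nonpos_Ints_def)
  ultimately show ?thesis unfolding B_def by (simp add: mult_ac)
qed



lemma err_term:
  fixes p a x :: real
  assumes p: "0 < p" "p < 1" and a: "a > 0" and x: "x \<ge> 2"
  shows "a * x powr (p - 1) * exp (- (a * x powr p))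
     \<le> (exp (- (a * (x - 1) powr p)) - exp (- (a * x powr p))) / p"
proof -
  have "\<exists>z. x - 1 < z \<and> z < x \<and> x powr p - (x - 1) powr p = (x - (x - 1)) * (p * z powr (p - 1))"
    by (rule MVT2) (use x in \<open>auto intro!: has_real_derivative_powr\<close>)
  then obtain z where z: "x - 1 < z" "z < x" "x powr p - (x - 1) powr p = (x - (x - 1)) * (p * z powr (p - 1))"
    by blast
  have "x powr (p - 1) \<le> z powr (p - 1)" using z x p by (intro powr_mono2') auto
  then have D: "a * p * x powr (p - 1) \<le> a * (x powr p - (x - 1) powr p)"
    using z p a by (simp add: mult_left_mono)
  define D where "D = a * (x powr p - (x - 1) powr p)"
  have "exp (- (a * (x - 1) powr p)) = exp (- (a * x powr p)) * exp D"
    unfolding D_def by (simp add: exp_add[symmetric] algebra_simps)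
  then have "exp (- (a * (x - 1) powr p)) - exp (- (a * x powr p)) = exp (- (a * x powr p)) * (exp D - 1)"
    by (simp add: algebra_simps)
  also have "\<dots> \<ge> exp (- (a * x powr p)) * D"
    using exp_ge_add_one_self[of D] by (intro mult_left_mono) (linarith, simp)
  finally have "exp (- (a * x powr p)) * (a * p * x powr (p - 1)) \<le> exp (- (a * (x - 1) powr p)) - exp (- (a * x powr p))"
    using D unfolding D_def[symmetric] by (meson exp_ge_zero mult_left_mono order_trans)
  then show ?thesis using p by (simp add: field_simps)
qed

lemma err_sum:
  fixes p a :: real
  assumes p: "0 < p" "p < 1" and a: "a > 0"
  shows "(\<Sum>k=2..N. a * real k powr (p - 1) * exp (- (a * real k powr p))) \<le> 1 / p"
proof -
  define h where "h k = exp (- (a * real k powr p))" for k :: nat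
  have "(\<Sum>k=2..N. a * real k powr (p - 1) * exp (- (a * real k powr p))) \<le> (1 - h N) / p"
  proof (induction N)
    case 0 then show ?case by (simp add: h_def)
  next
    case (Suc N)
    show ?case
    proof (cases "N = 0")
      case True
      then show ?thesis using p a by (simp add: h_def)
    next
      case False
      have "a * real (Suc N) powr (p - 1) * exp (- (a * real (Suc N) powr p)) \<le> (h N - h (Suc N)) / p"
        using err_term[OF p a, of "real (Suc N)"] False unfolding h_def by simp
      with Suc.IH False show ?thesis
        by (simp add: diff_divide_distrib)
    qed
  qed
  also have "\<dots> \<le> 1 / p" using p unfolding h_def by (simp add: divide_right_mono)
  finally show ?thesis .
qed

lemma delta_bound:
  fixes s d :: real
  assumes s: "s > 0" and d: "0 < d" "d < 1/2"
  shows "(1 - d) powr (- s) \<le> 1 + 2 * s * exp s * d"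
proof -
  have "- d - 2 * d\<^sup>2 \<le> ln (1 - d)" using d by (intro ln_one_minus_pos_lower_bound) auto
  moreover have "d * d \<le> d * (1/2)" using d by (intro mult_left_mono) auto
  ultimately have l: "- ln (1 - d) \<le> 2 * d" by (simp add: power2_eq_square)
  have "(1 - d) powr (- s) = exp (- s * ln (1 - d))" using d by (simp add: powr_def)
  also have "\<dots> \<le> exp (2 * s * d)"
  proof -
    have "s * (- ln (1 - d)) \<le> s * (2 * d)" using l s by (intro mult_left_mono) auto
    then show ?thesis by (simp add: mult_ac)
  qed
  also have "\<dots> \<le> 1 + 2 * s * d * exp (2 * s * d)"
  proof -
    have "1 + (- (2 * s * d)) \<le> exp (- (2 * s * d))" by (rule exp_ge_add_one_self)
    then have "(1 - 2 * s * d) * exp (2 * s * d) \<le> 1" by (simp add: exp_minus field_simps)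
    then show ?thesis by (simp add: algebra_simps)
  qed
  also have "\<dots> \<le> 1 + 2 * s * d * exp s"
    using s d by (intro add_left_mono mult_left_mono) auto
  finally show ?thesis by (simp add: mult_ac)
qed



lemma exp_small: "0 \<le> (v::real) \<Longrightarrow> v \<le> 1/2 \<Longrightarrow> exp v \<le> 1 + 2 * v"
proof -
  assume v: "0 \<le> v" "v \<le> 1/2"
  have "1 + (- v) \<le> exp (- v)" by (rule exp_ge_add_one_self)
  then have "(1 - v) * exp v \<le> 1" by (simp add: exp_minus field_simps)
  moreover have "v * (1 - 2 * v) \<ge> 0" using v by auto
  ultimately have "exp v * (1 - v) \<le> (1 + 2 * v) * (1 - v)"
    by (simp add: algebra_simps)
  then show ?thesis using v by (simp add: mult_le_cancel_right)
qed

lemma term_bound: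
  fixes r a :: real and k :: nat
  assumes r: "0 < r" "r < 1" and a: "0 < a" "a \<le> 1/2" and k: "k \<ge> 2"
  shows "measure (W_law r k) {a * real k powr (- r)..}
     \<le> r * (exp (- (a * real k powr (1 - r))) + 2 * (a * real k powr ((1 - r) - 1) * exp (- (a * real k powr (1 - r)))))"
proof -
  obtain m where km: "k = Suc (Suc m)" using k by (metis add_2_eq_Suc le_Suc_ex)
  define u where "u = a * real k powr (- r)"
  have "1 \<le> real k powr r" using k r by (intro ge_one_powr_ge_zero) auto
  then have kr: "real k powr (- r) \<le> 1" by (simp add: powr_minus inverse_le_1_iff)
  have kr0: "real k powr (- r) > 0" using k by simp
  have u: "0 < u" "u \<le> a" using a kr kr0 unfolding u_def by (auto simp: mult_left_le)
  have "measure (W_law r k) {u..} = r * (1 - u) ^ Suc m"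
    unfolding km using r u a by (intro W_tail) auto
  also have "(1 - u) ^ Suc m \<le> exp (- u) ^ Suc m"
    using u a by (intro power_mono) (auto simp: exp_ge_add_one_self[of "-u", simplified])
  also have "exp (- u) ^ Suc m = exp (real (Suc m) * (- u))" by (simp only: exp_of_nat_mult)
  also have "real (Suc m) * (- u) = - (a * real k powr (1 - r)) + u"
  proof -
    have "real k * real k powr (- r) = real k powr (1 - r)"
      using k by (simp add: powr_diff powr_minus divide_inverse)
    moreover have "real (Suc m) * (- u) = - (a * (real k * real k powr (- r))) + u"
      unfolding u_def using km by (simp add: algebra_simps)
    ultimately show ?thesis by simp
  qed
  also have "exp (- (a * real k powr (1 - r)) + u) = exp (- (a * real k powr (1 - r))) * exp u"
    by (rule exp_add)
  also have "\<dots> \<le> exp (- (a * real k powr (1 - r))) * (1 + 2 * u)"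
    using u a by (intro mult_left_mono exp_small) auto
  finally show ?thesis using r unfolding u_def by (simp add: algebra_simps)
qed



theorem lemma4p5:
  fixes r :: real
  assumes "0 < r" "r < 1"
  shows "\<exists>C::real. \<forall>(N::nat) (\<delta>::real) (S::real).
           N \<ge> 1 \<longrightarrow> 0 < \<delta> \<longrightarrow> \<delta> < 1/2 \<longrightarrow> 0 < S \<longrightarrow>
           S \<le> 1/2 * real N powr (1 - r) \<longrightarrow>
           (\<Sum>k = 1..N. measure (W_law r k)
               {w. w * (real k / real N) powr r \<ge> (1 - \<delta>) * S / real N})
             \<le> C + g_fun r N S * (1 + C * \<delta>)"
proof -
  define p where "p = 1 - r"
  define s where "s = 1 / (1 - r)"
  have p: "0 < p" "p < 1" using assms unfolding p_def by auto
  have s: "s > 1" using assms unfolding s_def by auto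
  have ps: "1 / s = p" unfolding s_def p_def by simp
  define C where "C = max (1 + 2 * r / p) (2 * s * exp s)"
  show ?thesis
  proof (intro exI[of _ C] allI impI)
    fix N :: nat and d S :: real
    assume N: "N \<ge> 1" and d: "0 < d" "d < 1/2" and S: "0 < S" "S \<le> 1/2 * real N powr (1 - r)"
    define a where "a = (1 - d) * S * real N powr (r - 1)"
    have a0: "0 < a" using d S N unfolding a_def by auto
    have "a \<le> S * real N powr (r - 1)" unfolding a_def using d S N by (simp add: mult_left_le_one_le)
    also have "\<dots> \<le> 1/2 * real N powr (1 - r) * real N powr (r - 1)"
      using S N by (intro mult_right_mono) auto
    also have "\<dots> = 1/2" using N by (simp add: powr_add[symmetric])
    finally have a1: "a \<le> 1/2" .
    define M where "M k = measure (W_law r k) {w. w * (real k / real N) powr r \<ge> (1 - d) * S / real N}" for k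
    have set_eq: "{w. w * (real k / real N) powr r \<ge> (1 - d) * S / real N} = {a * real k powr (- r)..}"
      if k: "k \<ge> 1" for k
    proof -
      have c: "(real k / real N) powr r > 0" using k N by simp
      have "(1 - d) * S / real N / (real k / real N) powr r = a * real k powr (- r)"
        unfolding a_def using k N
        by (simp add: powr_divide powr_minus powr_diff field_simps)
      moreover have "\<And>t c w::real. c > 0 \<Longrightarrow> (t \<le> w * c) = (t / c \<le> w)"
        by (simp add: pos_divide_le_eq)
      ultimately show ?thesis using c by auto
    qed
    have M1: "M 1 \<le> 1"
      unfolding M_def W_law_def
      by simp (rule prob_space.prob_le_1, simp add: prob_space_return)
    have Mk: "M k \<le> r * (exp (- (a * real k powr p)) + 2 * (a * real k powr (p - 1) * exp (- (a * real k powr p))))"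
      if "k \<in> {2..N}" for k
      using term_bound[OF assms a0 a1, of k] that set_eq[of k] unfolding M_def p_def by auto
    have "(\<Sum>k = 1..N. M k) = M 1 + (\<Sum>k = 2..N. M k)"
      using N by (simp add: sum.atLeast_Suc_atMost numeral_2_eq_2)
    also have "\<dots> \<le> 1 + (\<Sum>k = 2..N. r * (exp (- (a * real k powr p)) + 2 * (a * real k powr (p - 1) * exp (- (a * real k powr p)))))"
      using M1 Mk by (intro add_mono sum_mono) auto
    also have "\<dots> = 1 + r * ((\<Sum>k = 2..N. exp (- (a * real k powr p))) + 2 * (\<Sum>k = 2..N. a * real k powr (p - 1) * exp (- (a * real k powr p))))"
      by (simp only: sum_distrib_left[symmetric] sum.distrib)
    also have "\<dots> \<le> 1 + r * (Gamma (s + 1) * a powr (- s) + 2 * (1 / p))"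
      using main_sum[OF s a0, of N] err_sum[OF p a0, of N] assms unfolding ps
      by (intro add_left_mono mult_left_mono add_mono) auto
    also have "r * Gamma (s + 1) * a powr (- s) = g_fun r N S * (1 - d) powr (- s)"
    proof -
      have "a powr (- s) = (1 - d) powr (- s) * S powr (- s) * (real N powr (r - 1)) powr (- s)"
        unfolding a_def using d S N by (simp add: powr_mult)
      also have "(real N powr (r - 1)) powr (- s) = real N"
      proof -
        have e: "(r - 1) * - s = 1" using assms unfolding s_def by (simp add: field_simps)
        show ?thesis by (subst powr_powr, subst e, simp)
      qed
      finally have "a powr (- s) = (1 - d) powr (- s) * S powr (- s) * real N" .
      moreover have "(2 - r) / (1 - r) = s + 1" "- 1 / (1 - r) = - s"
        using assms unfolding s_def by (auto simp: field_simps)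
      ultimately show ?thesis unfolding g_fun_def by (simp add: mult_ac)
    qed
    then have "1 + r * (Gamma (s + 1) * a powr (- s) + 2 * (1 / p)) = (1 + 2 * r / p) + g_fun r N S * (1 - d) powr (- s)"
      by (simp add: algebra_simps)
    also have "\<dots> \<le> C + g_fun r N S * (1 + C * d)"
    proof -
      have g0: "g_fun r N S \<ge> 0" unfolding g_fun_def using assms s by simp
      have "(1 - d) powr (- s) \<le> 1 + 2 * s * exp s * d" using s d by (intro delta_bound) auto
      also have "\<dots> \<le> 1 + C * d" unfolding C_def using d by (intro add_left_mono mult_right_mono) auto
      finally show ?thesis using g0 unfolding C_def by (intro add_mono mult_left_mono) auto
    qed
    finally show "(\<Sum>k = 1..N. measure (W_law r k)
               {w. w * (real k / real N) powr r \<ge> (1 - d) * S / real N})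
             \<le> C + g_fun r N S * (1 + C * d)" unfolding M_def .
  qed
qed

end
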